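(* Let $q$ be a prime power, $2\le n\le m$, and let $\mathcal{C}_1,\mathcal{C}_2\subseteq\mathrm{Mat}$ be rank-metric codes with $\mathcal{C}_1\sim\mathcal{C}_2$. If $m>n$, then $P(\mathcal{C}_1,\mathrm c)\sim P(\mathcal{C}_2,\mathrm c)$ and $P(\mathcal{C}_1,\mathrm r)\sim P(\mathcal{C}_2,\mathrm r)$. If $n=m$, then either $P(\mathcal{C}_1,\mathrm c)\sim P(\mathcal{C}_2,\mathrm c)$ and $P(\mathcal{C}_1,\mathrm r)\sim P(\mathcal{C}_2,\mathrm r)$, or $P(\mathcal{C}_1,\mathrm c)\sim P(\mathcal{C}_2,\mathrm r)$ and $P(\mathcal{C}_1,\mathrm r)\sim P(\mathcal{C}_2,\mathrm c)$.
   Context: $\mathrm{Mat}$ is the $\mathbb{F}_q$-space of $n\times m$ matrices over $\mathbb{F}_q$; a rank-metric code is an $\mathbb{F}_q$-linear subspace. Codes are equivalent ($\mathcal{C}_1\sim\mathcal{C}_2$) if there is an $\mathbb{F}_q$-linear isometry $f:\mathrm{Mat}\to\mathrm{Mat}$ for the rank metric $d(M,N)=\mathrm{rk}(M-N)$ with $f(\mathcal{C}_1)=\mathcal{C}_2$. For subspaces $J\subseteq\mathbb{F}_q^n$, $K\subseteq\mathbb{F}_q^m$: $\mathcal{C}(J,\mathrm c)=\{M\in\mathcal{C}\mid\mathrm{colsp}(M)\subseteq J\}$, $\mathcal{C}(K,\mathrm r)=\{M\in\mathcal{C}\mid\mathrm{rowsp}(M)\subseteq K\}$, $\rho_{\mathrm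 c}(\mathcal{C},J)=(\dim\mathcal{C}-\dim\mathcal{C}(J^\perp,\mathrm c))/m$, $\rho_{\mathrm r}(\mathcal{C},K)=(\dim\mathcal{C}-\dim\mathcal{C}(K^\perp,\mathrm r))/n$ ($\perp$ for the standard inner product). $P(\mathcal{C},\mathrm c)=(\mathbb{F}_q^n,\rho_{\mathrm c}(\mathcal{C},\cdot))$ and $P(\mathcal{C},\mathrm r)=(\mathbb{F}_q^m,\rho_{\mathrm r}(\mathcal{C},\cdot))$ (these are $q$-polymatroids). Two pairs $(\mathbb{F}_q^N,\rho_1)$, $(\mathbb{F}_q^N,\rho_2)$ are equivalent ($\sim$) if there is an $\mathbb{F}_q$-linear isomorphism $\varphi:\mathbb{F}_q^N\to\mathbb{F}_q^N$ with $\rho_1(A)=\rho_2(\varphi(A))$ for all subspaces $A$. *)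

theory Defs
  imports "HOL-Analysis.Analysis"
begin

text \<open>Matrices in Mat are of type 'a^'m^'n : n = CARD('n) rows, m = CARD('m) columns,
  over a finite field 'a (so q = CARD('a) is a prime power).\<close>

definition mat_scale :: "'a::field \<Rightarrow> 'a^'m^'n \<Rightarrow> 'a^'m^'n" where
  "mat_scale c M = (\<chi> i j. c * M $ i $ j)"

text \<open>F_q-dimension of a set of matrices (the vector space Mat with scalar mat_scale).\<close>
definition mat_dim :: "('a::field^'m^'n) set \<Rightarrow> nat" where
  "mat_dim C = vector_space.dim (mat_scale :: 'a \<Rightarrow> 'a^'m^'n \<Rightarrow> 'a^'m^'n) C"

definition rank_metric_code :: "('a::field^'m^'n) set \<Rightarrow> bool" where
  "rank_metric_code C = module.subspace (mat_scale :: 'a \<Rightarrow> 'a^'m^'n \<Rightarrow> 'a^'m^'n) C"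

definition code_equiv :: "('a::field^'m^'n) set \<Rightarrow> ('a^'m^'n) set \<Rightarrow> bool" where
  "code_equiv C1 C2 \<longleftrightarrow> (\<exists>f :: 'a^'m^'n \<Rightarrow> 'a^'m^'n.
      Vector_Spaces.linear mat_scale mat_scale f \<and>
      (\<forall>M N. rank (f M - f N) = rank (M - N)) \<and> f ` C1 = C2)"

definition dotp :: "'a::field^'k \<Rightarrow> 'a^'k \<Rightarrow> 'a" where
  "dotp u v = (\<Sum>i\<in>UNIV. u $ i * v $ i)"

definition orth :: "('a::field^'k) set \<Rightarrow> ('a^'k) set" where
  "orth J = {v. \<forall>u\<in>J. dotp u v = 0}"

definition colsp :: "'a::field^'m^'n \<Rightarrow> ('a^'n) set" where
  "colsp M = vec.span (columns M)"

definition rowsp :: "'a::field^'m^'n \<Rightarrow> ('a^'m) set" where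
  "rowsp M = vec.span (rows M)"

definition sub_c :: "('a::field^'m^'n) set \<Rightarrow> ('a^'n) set \<Rightarrow> ('a^'m^'n) set" where
  "sub_c C J = {M\<in>C. colsp M \<subseteq> J}"

definition sub_r :: "('a::field^'m^'n) set \<Rightarrow> ('a^'m) set \<Rightarrow> ('a^'m^'n) set" where
  "sub_r C K = {M\<in>C. rowsp M \<subseteq> K}"

definition rho_c :: "('a::field^'m^'n) set \<Rightarrow> ('a^'n) set \<Rightarrow> real" where
  "rho_c C J = (real (mat_dim C) - real (mat_dim (sub_c C (orth J)))) / real CARD('m)"

definition rho_r :: "('a::field^'m^'n) set \<Rightarrow> ('a^'m) set \<Rightarrow> real" where
  "rho_r C K = (real (mat_dim C) - real (mat_dim (sub_r C (orth K)))) / real CARD('n)"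

text \<open>Equivalence of pairs (F_q^N, rho1), (F_q^N, rho2): a linear bijection phi with
  rho1 A = rho2 (phi A) for all subspaces A.  The two copies of F_q^N may be indexed
  by different (equicardinal) index types, which is needed when n = m but the
  row and column index types differ.\<close>
definition qpm_equiv :: "(('a::field^'k) set \<Rightarrow> real) \<Rightarrow> (('a^'l) set \<Rightarrow> real) \<Rightarrow> bool" where
  "qpm_equiv rho1 rho2 \<longleftrightarrow> (\<exists>\<phi> :: 'a^'k \<Rightarrow> 'a^'l.
      Vector_Spaces.linear (*s) (*s) \<phi> \<and> bij \<phi> \<and>
      (\<forall>A. vec.subspace A \<longrightarrow> rho1 A = rho2 (\<phi> ` A)))"

end

theory Submission
  imports Defs
begin

definition outer :: "'a::field^'n \<Rightarrow> 'a^'m \<Rightarrow> 'a^'m^'n" where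
  "outer x w = (\<chi> i j. x$i * w$j)"
definition Lset :: "'a::field^'n \<Rightarrow> ('a^'m^'n) set" where "Lset u = range (outer u)"
definition Rset :: "'a::field^'m \<Rightarrow> ('a^'m^'n) set" where "Rset w = range (\<lambda>x. outer x w)"
definition rk1 :: "'a::field^'m^'n \<Rightarrow> bool" where "rk1 M \<longleftrightarrow> (\<exists>x w. M = outer x w)"
definition par :: "'a::field^'n \<Rightarrow> 'a^'n \<Rightarrow> bool" where
  "par x y \<longleftrightarrow> (\<forall>i k. x$i * y$k = x$k * y$i)"
definition Matc :: "('a::field^'n) set \<Rightarrow> ('a^'m^'n) set" where
  "Matc V = {M. \<forall>j. column j M \<in> V}"

lemma vs_mat: "vector_space (mat_scale :: 'a::field \<Rightarrow> 'a^'m^'n \<Rightarrow> _)"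
  by unfold_locales (auto simp: mat_scale_def vec_eq_iff algebra_simps)

lemma outer_nth[simp]: "outer x w $ i $ j = x$i * w$j"
  by (simp add: outer_def)

lemma outer_add_left: "outer (x + y) w = outer x w + outer y w"
  by (simp add: vec_eq_iff algebra_simps)
lemma outer_add_right: "outer x (w + z) = outer x w + outer x z"
  by (simp add: vec_eq_iff algebra_simps)
lemma outer_scale_left: "outer (c *s x) w = mat_scale c (outer x w)"
  by (simp add: vec_eq_iff mat_scale_def)
lemma outer_0_left[simp]: "outer 0 w = 0" by (simp add: vec_eq_iff)
lemma outer_0_right[simp]: "outer x 0 = 0" by (simp add: vec_eq_iff)

lemma outer_eq_0: "outer x w = 0 \<longleftrightarrow> x = 0 \<or> w = 0"
  by (auto simp: vec_eq_iff) 

lemma rk1_minor: "rk1 M \<Longrightarrow> M$i$j * M$k$l = M$i$l * M$k$j"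
  unfolding rk1_def by (auto simp: algebra_simps)

lemma rk1_sum: assumes "rk1 (outer x w + outer y z)" shows "par x y \<or> par w z"
proof (rule ccontr)
  assume "\<not> (par x y \<or> par w z)"
  then obtain i k j l where a: "x$i * y$k \<noteq> x$k * y$i" and b: "w$j * z$l \<noteq> w$l * z$j"
    unfolding par_def by blast
  have "(x$i * y$k - x$k * y$i) * (w$j * z$l - w$l * z$j) \<noteq> 0" using a b by simp
  moreover have "(outer x w + outer y z)$i$j * (outer x w + outer y z)$k$l
     = (outer x w + outer y z)$i$l * (outer x w + outer y z)$k$j" by (rule rk1_minor[OF assms])
  ultimately show False by (simp add: algebra_simps)
qed

lemma par_sym: "par x y \<Longrightarrow> par y x" unfolding par_def by (metis mult.commute)
lemma par_scale: assumes "b \<noteq> 0" "par b a" shows "\<exists>c. a = c *s b"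
proof -
  obtain k where k: "b$k \<noteq> 0" using assms(1) by (auto simp: vec_eq_iff)
  have "a = (a$k / b$k) *s b" using assms(2) k unfolding par_def
    by (auto simp: vec_eq_iff field_simps)
  then show ?thesis by blast
qed
lemma scale_par: "par b (c *s b)" unfolding par_def by simp
lemma par_trans: assumes "b \<noteq> 0" "par a b" "par b c" shows "par a c"
proof -
  obtain s where "a = s *s b" using par_scale[OF assms(1) par_sym[OF assms(2)]] by blast
  moreover obtain t where "c = t *s b" using par_scale[OF assms(1) assms(3)] by blast
  ultimately show ?thesis unfolding par_def by (simp add: algebra_simps)
qed

lemma rows_sub0: "rows M \<subseteq> {0} \<longleftrightarrow> M = 0"
proof
  assume h: "rows M \<subseteq> {0}"
  have "\<And>i. row i M \<in> rows M" by (auto simp: rows_def)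
  then have "\<And>i. row i M = 0" using h by blast
  then show "M = 0" by (simp add: row_def vec_eq_iff)
qed (auto simp: rows_def row_def vec_eq_iff)

lemma rank_eq0: "rank (M::'a::field^'m^'n) = 0 \<longleftrightarrow> M = 0"
  by (simp add: row_rank_def_gen rows_sub0)

lemma rank_le1: "rank (M::'a::{finite,field}^'m^'n) \<le> 1 \<longleftrightarrow> rk1 M"
proof
  assume "rk1 M"
  then obtain x w where M: "M = outer x w" by (auto simp: rk1_def)
  have "rows M \<subseteq> vec.span {w}"
    by (auto simp: M rows_def row_def vec.span_singleton vec_eq_iff)
  then have "vec.dim (rows M) \<le> card {w}" by (intro vec.dim_le_card) auto
  then show "rank M \<le> 1" by (simp add: row_rank_def_gen)
next
  assume r: "rank M \<le> 1"
  obtain B where B: "B \<subseteq> rows M" "vec.independent B" "rows M \<subseteq> vec.span B" "card B = vec.dim (rows M)"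
    using vec.basis_exists by blast
  have fin: "finite B" by simp
  have "card B \<le> Suc 0" using r B(4) by (simp add: row_rank_def_gen)
  then have "\<forall>a\<in>B. \<forall>b\<in>B. a = b" using card_le_Suc0_iff_eq[OF fin] by blast
  then obtain w where "B \<subseteq> {w}" by blast
  then have "rows M \<subseteq> vec.span {w}" using B(3) vec.span_mono by blast
  then have "\<forall>i. \<exists>c. M$i = c *s w"
    by (auto simp: rows_def row_def vec.span_singleton)
  then obtain c where c: "\<And>i. M$i = c i *s w" by metis
  have "M = outer (\<chi> i. c i) w" using c by (simp add: vec_eq_iff)
  then show "rk1 M" by (auto simp: rk1_def)
qed

lemma Lset_closed: "a \<in> Lset u \<Longrightarrow> b \<in> Lset u \<Longrightarrow> a + b \<in> Lset u"
  by (auto simp: Lset_def outer_add_right[symmetric])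
lemma Rset_closed: "a \<in> Rset u \<Longrightarrow> b \<in> Rset u \<Longrightarrow> a + b \<in> Rset u"
  by (auto simp: Rset_def outer_add_left[symmetric])
lemma Lset_rk1: "a \<in> Lset u \<Longrightarrow> rk1 a" by (auto simp: Lset_def rk1_def)
lemma Rset_rk1: "a \<in> Rset u \<Longrightarrow> rk1 a" by (auto simp: Rset_def rk1_def)

lemma outer_in_Lset: "outer u w \<in> Lset u" by (simp add: Lset_def)
lemma outer_in_Rset: "outer u w \<in> Rset w" by (simp add: Rset_def)

lemma Lset_sub: assumes "outer a w = outer c z" "outer a w \<noteq> 0" shows "Lset a \<subseteq> Lset c"
proof -
  have "w \<noteq> 0" using assms(2) by auto
  then obtain j where j: "w$j \<noteq> 0" by (auto simp: vec_eq_iff)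
  have "\<And>i. a$i * w$j = c$i * z$j" using assms(1) by (metis outer_nth)
  then have "a = (z$j / w$j) *s c" using j by (auto simp: vec_eq_iff field_simps)
  then have "\<And>v. outer a v = outer c ((z$j / w$j) *s v)" by (simp add: vec_eq_iff)
  then show ?thesis by (auto simp: Lset_def)
qed

lemma Rset_sub: assumes "outer x b = outer y d" "outer x b \<noteq> 0" shows "Rset b \<subseteq> Rset d"
proof -
  have "x \<noteq> 0" using assms(2) by auto
  then obtain i where i: "x$i \<noteq> 0" by (auto simp: vec_eq_iff)
  have "\<And>j. x$i * b$j = y$i * d$j" using assms(1) by (metis outer_nth)
  then have "b = (y$i / x$i) *s d" using i by (auto simp: vec_eq_iff field_simps)
  then have "\<And>v. outer v b = outer ((y$i / x$i) *s v) d" by (simp add: vec_eq_iff)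
  then show ?thesis by (auto simp: Rset_def)
qed

lemma exists_nonpar: assumes "(w::'a::field^'m) \<noteq> 0" "2 \<le> CARD('m)" shows "\<exists>z. \<not> par w z"
proof -
  obtain k where k: "w$k \<noteq> 0" using assms(1) by (auto simp: vec_eq_iff)
  have "\<exists>j::'m. j \<noteq> k"
  proof (rule ccontr)
    assume "\<not> ?thesis"
    then have "(UNIV::'m set) = {k}" by auto
    then have "CARD('m) = card {k}" by (simp only:)
    then show False using assms(2) by simp
  qed
  then obtain j where j: "j \<noteq> k" by blast
  have "\<not> par w (axis j 1)"
  proof
    assume "par w (axis j 1)"
    then have "w$k * axis j 1 $ j = w$j * axis j 1 $ k" unfolding par_def by blast
    then show False using k j by (simp add: axis_def)
  qed
  then show ?thesis by blast
qed

lemma dichotomy: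
  assumes rk: "\<forall>M\<in>S. rk1 M" and cl: "\<forall>a\<in>S. \<forall>b\<in>S. a + b \<in> S"
  shows "(\<exists>u. S \<subseteq> Lset u) \<or> (\<exists>w. S \<subseteq> Rset w)"
proof (cases "S \<subseteq> {0}")
  case True
  then have "S \<subseteq> Lset 0" by (auto simp: Lset_def)
  then show ?thesis by blast
next
  case False
  then obtain A where A: "A \<in> S" "A \<noteq> 0" by blast
  then obtain u1 w1 where A1: "A = outer u1 w1" using rk rk1_def by blast
  have u1: "u1 \<noteq> 0" and w1: "w1 \<noteq> 0" using A A1 by auto
  show ?thesis
  proof (rule ccontr)
    assume "\<not> ?thesis"
    then obtain B1 B2 where B1: "B1 \<in> S" "B1 \<notin> Lset u1" and B2: "B2 \<in> S" "B2 \<notin> Rset w1" by blast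
    obtain x1 z1 where b1: "B1 = outer x1 z1" using rk B1 rk1_def by blast
    obtain x2 z2 where b2: "B2 = outer x2 z2" using rk B2 rk1_def by blast
    have np1: "\<not> par u1 x1"
    proof
      assume "par u1 x1"
      then obtain c where "x1 = c *s u1" using par_scale[OF u1] by blast
      then have "B1 = outer u1 (c *s z1)" using b1 by (simp add: vec_eq_iff)
      then show False using B1 by (simp add: Lset_def)
    qed
    have np2: "\<not> par w1 z2"
    proof
      assume "par w1 z2"
      then obtain c where "z2 = c *s w1" using par_scale[OF w1] by blast
      then have "B2 = outer (c *s x2) w1" using b2 by (simp add: vec_eq_iff)
      then show False using B2 by (simp add: Rset_def)
    qed
    have "rk1 (A + B1)" using rk cl A(1) B1(1) by blast
    then have "rk1 (outer u1 w1 + outer x1 z1)" using A1 b1 by simp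
    then have p1: "par w1 z1" using rk1_sum np1 by blast
    have "rk1 (A + B2)" using rk cl A(1) B2(1) by blast
    then have "rk1 (outer u1 w1 + outer x2 z2)" using A1 b2 by simp
    then have p2: "par u1 x2" using rk1_sum np2 by blast
    have "rk1 (B1 + B2)" using rk cl B1(1) B2(1) by blast
    then have "rk1 (outer x1 z1 + outer x2 z2)" using b1 b2 by simp
    then have "par x1 x2 \<or> par z1 z2" using rk1_sum by blast
    then show False
    proof
      assume "par x1 x2"
      have "x2 \<noteq> 0" using B2 b2 outer_in_Rset[of 0 w1] by auto
      then have "par u1 x1" using par_trans[OF _ p2 par_sym[OF \<open>par x1 x2\<close>]] by simp
      then show False using np1 by simp
    next
      assume "par z1 z2"
      have "z1 \<noteq> 0" using B1 b1 outer_in_Lset[of u1 0] by auto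
      then have "par w1 z2" using par_trans[OF _ p1 \<open>par z1 z2\<close>] by simp
      then show False using np2 by simp
    qed
  qed
qed

lemma card_field2: "2 \<le> CARD('a::{finite,field})"
proof -
  have "card {0::'a, 1} = 2" by simp
  moreover have "card {0::'a, 1} \<le> CARD('a)" by (rule card_mono) auto
  ultimately show ?thesis by simp
qed

lemma card_Lset: assumes "u \<noteq> 0" shows "card (Lset u :: ('a::{finite,field}^'m^'n) set) = CARD('a)^CARD('m)"
proof -
  obtain i where i: "u$i \<noteq> 0" using assms by (auto simp: vec_eq_iff)
  have "inj (outer u :: 'a^'m \<Rightarrow> 'a^'m^'n)"
  proof (rule injI)
    fix w z :: "'a^'m" assume "outer u w = outer u z"
    then have "\<And>j. u$i * w$j = u$i * z$j" by (metis outer_nth)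
    then show "w = z" using i by (simp add: vec_eq_iff)
  qed
  then have "card (range (outer u :: 'a^'m \<Rightarrow> 'a^'m^'n)) = card (UNIV :: ('a^'m) set)"
    by (rule card_image)
  then show ?thesis unfolding Lset_def by (simp only: CARD_vec)
qed

lemma card_Rset: "card (Rset w :: ('a::{finite,field}^'m^'n) set) \<le> CARD('a)^CARD('n)"
proof -
  have "card (range (\<lambda>x. outer x w) :: ('a^'m^'n) set) \<le> card (UNIV :: ('a^'n) set)"
    by (rule card_image_le) simp
  then show ?thesis unfolding Rset_def by (simp only: CARD_vec)
qed

lemma lin_add: "Vector_Spaces.linear s1 s2 f \<Longrightarrow> f (a + b) = f a + f b"
  by (simp add: Vector_Spaces.linear_iff)
lemma lin_scale: "Vector_Spaces.linear s1 s2 f \<Longrightarrow> f (s1 c a) = s2 c (f a)"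
  by (simp add: Vector_Spaces.linear_iff)
lemma lin_0: "Vector_Spaces.linear s1 s2 f \<Longrightarrow> f 0 = 0"
  using lin_add[of s1 s2 f 0 0] by simp
lemma lin_diff: "Vector_Spaces.linear s1 s2 f \<Longrightarrow> f (a - b) = f a - f b"
  using lin_add[of s1 s2 f "a - b" b] by (simp add: algebra_simps)

context
  fixes f :: "'a::{finite,field}^'m^'n \<Rightarrow> 'a^'m^'n"
  assumes lf: "Vector_Spaces.linear mat_scale mat_scale f"
    and rp: "\<forall>M N. rank (f M - f N) = rank (M - N)"
begin

lemma f_rank: "rank (f M) = rank M"
  using rp lin_0[OF lf] by (metis diff_zero)

lemma f_inj: "inj f"
proof (rule injI)
  fix a b assume "f a = f b"
  then have "rank (a - b) = 0" using rp by (metis diff_self rank_eq0)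
  then show "a = b" by (simp add: rank_eq0)
qed

lemma f_rk1: "rk1 (f M) \<longleftrightarrow> rk1 M"
  using f_rank rank_le1 by metis

lemma f_nz: "M \<noteq> 0 \<Longrightarrow> f M \<noteq> 0"
  using f_inj lin_0[OF lf] by (metis injD)

lemma img_props:
  assumes "\<forall>M\<in>S. rk1 M" "\<forall>a\<in>S. \<forall>b\<in>S. a + b \<in> S"
  shows "\<forall>M\<in>f ` S. rk1 M" "\<forall>a\<in>f ` S. \<forall>b\<in>f ` S. a + b \<in> f ` S"
proof -
  show "\<forall>M\<in>f ` S. rk1 M" using assms(1) f_rk1 by blast
  show "\<forall>a\<in>f ` S. \<forall>b\<in>f ` S. a + b \<in> f ` S"
  proof (intro ballI)
    fix a b assume "a \<in> f ` S" "b \<in> f ` S"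
    then obtain x y where xy: "x \<in> S" "y \<in> S" "a = f x" "b = f y" by blast
    then have "a + b = f (x + y)" using lin_add[OF lf] by simp
    moreover have "x + y \<in> S" using assms(2) xy by blast
    ultimately show "a + b \<in> f ` S" by blast
  qed
qed

lemma dichL: "(\<exists>a. f ` Lset u \<subseteq> Lset a) \<or> (\<exists>b. f ` Lset u \<subseteq> Rset b)"
proof -
  have "\<forall>M\<in>Lset u. rk1 M" "\<forall>a\<in>Lset u. \<forall>b\<in>Lset u. a+b \<in> Lset u"
    using Lset_closed Lset_rk1 by blast+
  then show ?thesis by (intro dichotomy img_props)
qed
lemma dichR: "(\<exists>a. f ` Rset w \<subseteq> Lset a) \<or> (\<exists>b. f ` Rset w \<subseteq> Rset b)"
proof -
  have "\<forall>M\<in>Rset w. rk1 M" "\<forall>a\<in>Rset w. \<forall>b\<in>Rset w. a+b \<in> Rset w"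
    using Rset_closed Rset_rk1 by blast+
  then show ?thesis by (intro dichotomy img_props)
qed

context
  assumes n2: "2 \<le> CARD('n)" and m2: "2 \<le> CARD('m)"
begin

lemma K:
  assumes u: "u \<noteq> 0" and w: "w \<noteq> 0"
    and T: "\<forall>M\<in>T. rk1 M" "\<forall>a\<in>T. \<forall>b\<in>T. a + b \<in> T"
    and fR: "f ` Rset w \<subseteq> T" and fL: "f ` Lset u \<subseteq> T"
  shows False
proof -
  obtain z where z: "\<not> par w z" using exists_nonpar[OF w m2] by blast
  obtain x where x: "\<not> par u x" using exists_nonpar[OF u n2] by blast
  have "f (outer u z) \<in> T" using fL outer_in_Lset by blast
  moreover have "f (outer x w) \<in> T" using fR outer_in_Rset by blast
  ultimately have "f (outer u z + outer x w) \<in> T" using T(2) lin_add[OF lf] by metis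
  then have "rk1 (outer u z + outer x w)" using T(1) f_rk1 by blast
  then have "par u x \<or> par z w" by (rule rk1_sum)
  then show False using x z par_sym by blast
qed

lemma C1:
  assumes u: "u \<noteq> 0" and w: "w \<noteq> 0" and a: "f ` Lset u \<subseteq> Lset a" and c: "f ` Rset w \<subseteq> Lset c"
  shows False
proof -
  have X: "f (outer u w) \<noteq> 0" using f_nz u w by (simp add: outer_eq_0)
  obtain p where p: "f (outer u w) = outer a p" using a outer_in_Lset by (fastforce simp: Lset_def)
  obtain q where q: "f (outer u w) = outer c q" using c outer_in_Rset by (fastforce simp: Lset_def)
  have "Lset a \<subseteq> Lset c" using Lset_sub[of a p c q] p q X by simp
  then have "f ` Lset u \<subseteq> Lset c" using a by blast
  then show False using K[OF u w, of "Lset c"] c Lset_closed Lset_rk1 by blast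
qed

lemma C2:
  assumes u: "u \<noteq> 0" and w: "w \<noteq> 0" and b: "f ` Lset u \<subseteq> Rset b" and d: "f ` Rset w \<subseteq> Rset d"
  shows False
proof -
  have X: "f (outer u w) \<noteq> 0" using f_nz u w by (simp add: outer_eq_0)
  obtain p where p: "f (outer u w) = outer p b" using b outer_in_Lset by (fastforce simp: Rset_def)
  obtain q where q: "f (outer u w) = outer q d" using d outer_in_Rset by (fastforce simp: Rset_def)
  have "Rset b \<subseteq> Rset d" using Rset_sub[of p b q d] p q X by simp
  then have "f ` Lset u \<subseteq> Rset d" using b by blast
  then show False using K[OF u w, of "Rset d"] d Rset_closed Rset_rk1 by blast
qed

lemma classify:
  "((\<forall>u. u \<noteq> 0 \<longrightarrow> (\<exists>a. f ` Lset u \<subseteq> Lset a)) \<and> (\<forall>w. w \<noteq> 0 \<longrightarrow> (\<exists>b. f ` Rset w \<subseteq> Rset b)))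
 \<or> ((\<forall>u. u \<noteq> 0 \<longrightarrow> (\<exists>a. f ` Lset u \<subseteq> Rset a)) \<and> (\<forall>w. w \<noteq> 0 \<longrightarrow> (\<exists>b. f ` Rset w \<subseteq> Lset b)))"
proof -
  define w0 :: "'a^'m" where "w0 = axis undefined 1"
  have w0: "w0 \<noteq> 0" by (simp add: w0_def)
  from dichR[of w0] show ?thesis
  proof
    assume "\<exists>c. f ` Rset w0 \<subseteq> Lset c"
    then obtain c where c: "f ` Rset w0 \<subseteq> Lset c" by blast
    have QL: "\<forall>u. u \<noteq> 0 \<longrightarrow> (\<exists>a. f ` Lset u \<subseteq> Rset a)"
    proof (intro allI impI)
      fix u :: "'a^'n" assume u: "u \<noteq> 0"
      show "\<exists>a. f ` Lset u \<subseteq> Rset a"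
      proof (rule disjE[OF dichL[of u]])
        assume "\<exists>a. f ` Lset u \<subseteq> Lset a"
        then obtain a where "f ` Lset u \<subseteq> Lset a" by blast
        then show ?thesis using C1[OF u w0 _ c] by blast
      qed
    qed
    have "\<forall>w. w \<noteq> 0 \<longrightarrow> (\<exists>b. f ` Rset w \<subseteq> Lset b)"
    proof (intro allI impI)
      fix w :: "'a^'m" assume w: "w \<noteq> 0"
      define u0 :: "'a^'n" where "u0 = axis undefined 1"
      have u0: "u0 \<noteq> 0" by (simp add: u0_def)
      obtain a where a: "f ` Lset u0 \<subseteq> Rset a" using QL u0 by blast
      show "\<exists>b. f ` Rset w \<subseteq> Lset b"
      proof (rule disjE[OF dichR[of w]])
        assume "\<exists>b. f ` Rset w \<subseteq> Rset b"
        then obtain b where "f ` Rset w \<subseteq> Rset b" by blast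
        then show ?thesis using C2[OF u0 w a] by blast
      qed
    qed
    with QL show ?thesis by blast
  next
    assume "\<exists>c. f ` Rset w0 \<subseteq> Rset c"
    then obtain c where c: "f ` Rset w0 \<subseteq> Rset c" by blast
    have PL: "\<forall>u. u \<noteq> 0 \<longrightarrow> (\<exists>a. f ` Lset u \<subseteq> Lset a)"
    proof (intro allI impI)
      fix u :: "'a^'n" assume u: "u \<noteq> 0"
      show "\<exists>a. f ` Lset u \<subseteq> Lset a"
      proof (rule disjE[OF dichL[of u]])
        assume "\<exists>a. f ` Lset u \<subseteq> Rset a"
        then obtain a where "f ` Lset u \<subseteq> Rset a" by blast
        then show ?thesis using C2[OF u w0 _ c] by blast
      qed
    qed
    have "\<forall>w. w \<noteq> 0 \<longrightarrow> (\<exists>b. f ` Rset w \<subseteq> Rset b)"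
    proof (intro allI impI)
      fix w :: "'a^'m" assume w: "w \<noteq> 0"
      define u0 :: "'a^'n" where "u0 = axis undefined 1"
      have u0: "u0 \<noteq> 0" by (simp add: u0_def)
      obtain a where a: "f ` Lset u0 \<subseteq> Lset a" using PL u0 by blast
      show "\<exists>b. f ` Rset w \<subseteq> Rset b"
      proof (rule disjE[OF dichR[of w]])
        assume "\<exists>b. f ` Rset w \<subseteq> Lset b"
        then obtain b where "f ` Rset w \<subseteq> Lset b" by blast
        then show ?thesis using C1[OF u0 w a] by blast
      qed
    qed
    with PL show ?thesis by blast
  qed
qed

lemma classify_gt:
  assumes "CARD('n) < CARD('m)"
  shows "(\<forall>u. u \<noteq> 0 \<longrightarrow> (\<exists>a. f ` Lset u \<subseteq> Lset a)) \<and> (\<forall>w. w \<noteq> 0 \<longrightarrow> (\<exists>b. f ` Rset w \<subseteq> Rset b))"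
proof -
  define u0 :: "'a^'n" where "u0 = axis undefined 1"
  have u0: "u0 \<noteq> 0" by (simp add: u0_def)
  have "\<not> f ` Lset u0 \<subseteq> Rset a" for a
  proof
    assume h: "f ` Lset u0 \<subseteq> Rset a"
    have "card (f ` Lset u0) = CARD('a)^CARD('m)"
      using card_Lset[OF u0] f_inj by (simp add: card_image inj_on_subset)
    moreover have "card (f ` Lset u0) \<le> CARD('a)^CARD('n)"
      using card_mono[OF _ h] card_Rset[of a] by (meson finite order_trans)
    moreover have "CARD('a)^CARD('n) < CARD('a)^CARD('m)"
      using assms card_field2[where 'a='a] by (intro power_strict_increasing) auto
    ultimately show False by simp
  qed
  then have "\<not> (\<forall>u. u \<noteq> 0 \<longrightarrow> (\<exists>a. f ` Lset u \<subseteq> Rset a))" using u0 by blast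
  then show ?thesis using classify by blast
qed

end
end

lemma lin_sum: assumes l: "Vector_Spaces.linear s1 s2 f" and "finite A"
  shows "f (sum g A) = (\<Sum>x\<in>A. f (g x))"
  using assms(2) by (induct A rule: finite_induct) (simp_all add: lin_0[OF l] lin_add[OF l])

lemma colsp_sub: "vec.subspace V \<Longrightarrow> colsp M \<subseteq> V \<longleftrightarrow> M \<in> Matc V"
  unfolding colsp_def Matc_def
proof
  assume "vec.subspace V" "vec.span (columns M) \<subseteq> V"
  then show "M \<in> {M. \<forall>j. column j M \<in> V}"
    using vec.span_superset by (fastforce simp: columns_def)
next
  assume "vec.subspace V" "M \<in> {M. \<forall>j. column j M \<in> V}"
  then show "vec.span (columns M) \<subseteq> V"
    by (intro vec.span_minimal) (auto simp: columns_def)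
qed

lemma outer_expand: "M = (\<Sum>j\<in>UNIV. outer (column j M) (axis j 1))"
  by (simp add: vec_eq_iff column_def axis_def sum_component if_distrib cong: if_cong)

lemma column_sum: "column l (sum X A) = (\<Sum>j\<in>A. column l (X j))"
  by (simp add: vec_eq_iff column_def sum_component)

lemma Matc_sum: "vec.subspace W \<Longrightarrow> (\<And>j. j \<in> A \<Longrightarrow> X j \<in> Matc W) \<Longrightarrow> sum X A \<in> Matc W"
  unfolding Matc_def by (auto simp: column_sum intro!: vec.subspace_sum)

lemma subspace_img:
  assumes l: "Vector_Spaces.linear (*s) (*s) (\<psi>::'a::field^'n \<Rightarrow> 'a^'k)" and V: "vec.subspace V"
  shows "vec.subspace (\<psi> ` V)"
  unfolding vec.subspace_def
proof (intro conjI ballI allI)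
  show "0 \<in> \<psi> ` V" using lin_0[OF l] vec.subspace_0[OF V] by (metis image_eqI)
  fix x y assume "x \<in> \<psi> ` V" "y \<in> \<psi> ` V"
  then obtain a b where "a \<in> V" "b \<in> V" "x = \<psi> a" "y = \<psi> b" by blast
  then show "x + y \<in> \<psi> ` V" using lin_add[OF l] vec.subspace_add[OF V] by (metis image_eqI)
next
  fix c x assume "x \<in> \<psi> ` V"
  then obtain a where "a \<in> V" "x = \<psi> a" by blast
  then show "c *s x \<in> \<psi> ` V" using lin_scale[OF l] vec.subspace_scale[OF V] by (metis image_eqI)
qed

lemma card_vecset: "card {N :: 'b^'m. \<forall>j. N$j \<in> V} = card V ^ CARD('m)"
proof -
  have inj: "inj_on vec_nth {N :: 'b^'m. \<forall>j. N$j \<in> V}" by (auto simp: inj_on_def vec_eq_iff)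
  have "vec_nth ` {N :: 'b^'m. \<forall>j. N$j \<in> V} = Pi\<^sub>E UNIV (\<lambda>_. V)"
  proof
    show "vec_nth ` {N :: 'b^'m. \<forall>j. N$j \<in> V} \<subseteq> Pi\<^sub>E UNIV (\<lambda>_. V)" by auto
    show "Pi\<^sub>E UNIV (\<lambda>_. V) \<subseteq> vec_nth ` {N :: 'b^'m. \<forall>j. N$j \<in> V}"
    proof
      fix g assume g: "g \<in> Pi\<^sub>E (UNIV::'m set) (\<lambda>_. V)"
      have "g = vec_nth (vec_lambda g)" by (simp add: fun_eq_iff)
      moreover have "vec_lambda g \<in> {N :: 'b^'m. \<forall>j. N$j \<in> V}" using g by auto
      ultimately show "g \<in> vec_nth ` {N :: 'b^'m. \<forall>j. N$j \<in> V}" by blast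
    qed
  qed
  then have "card {N :: 'b^'m. \<forall>j. N$j \<in> V} = card (Pi\<^sub>E (UNIV::'m set) (\<lambda>_. V))"
    using card_image[OF inj] by simp
  also have "\<dots> = card V ^ CARD('m)" by (simp add: card_PiE)
  finally show ?thesis .
qed

lemma card_Matc: "card (Matc V :: ('a::field^'m^'n) set) = card V ^ CARD('m)"
proof -
  have "Matc V = transpose ` {N :: 'a^'n^'m. \<forall>j. N$j \<in> V}"
  proof -
    have "Matc V = {M. transpose M \<in> {N :: 'a^'n^'m. \<forall>j. N$j \<in> V}}"
      unfolding Matc_def column_def transpose_def by simp
    also have "\<dots> = transpose ` {N :: 'a^'n^'m. \<forall>j. N$j \<in> V}"
      by (auto simp: image_iff) (metis transpose_transpose)
    finally show ?thesis .
  qed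
  moreover have "inj (transpose :: 'a^'n^'m \<Rightarrow> _)" by (simp add: inj_def)
  ultimately show ?thesis by (simp add: card_image inj_on_subset card_vecset)
qed

lemma core:
  fixes f :: "'a::{finite,field}^'m^'n \<Rightarrow> 'a^'m2^'n2" and w0 :: "'a^'m" and w' :: "'a^'m2"
  assumes lf: "Vector_Spaces.linear mat_scale mat_scale f" and fi: "inj f"
    and cm: "CARD('m) = CARD('m2)"
    and PL: "\<forall>u. u \<noteq> 0 \<longrightarrow> (\<exists>a. f ` Lset u \<subseteq> Lset a)"
    and w0: "w0 \<noteq> 0" and PR: "f ` Rset w0 \<subseteq> Rset w'"
  shows "\<exists>\<psi>::'a^'n \<Rightarrow> 'a^'n2. Vector_Spaces.linear (*s) (*s) \<psi> \<and> inj \<psi> \<and>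
           (\<forall>V. vec.subspace V \<longrightarrow> f ` Matc V = Matc (\<psi> ` V))"
proof -
  have f0: "f 0 = 0" by (rule lin_0[OF lf])
  have fnz: "M \<noteq> 0 \<Longrightarrow> f M \<noteq> 0" for M using fi f0 by (metis injD)
  obtain j0 where j0: "w0$j0 \<noteq> 0" using w0 by (auto simp: vec_eq_iff)
  have ex: "\<exists>x. f (outer u w0) = outer x w'" for u 
  proof -
    have "f (outer u w0) \<in> Rset w'" using PR outer_in_Rset[of u w0] by blast
    then show ?thesis by (auto simp: Rset_def)
  qed
  have "w' \<noteq> 0"
  proof
    assume "w' = 0"
    then have "f (outer (axis undefined 1) w0) = 0" using ex by auto
    moreover have "outer (axis undefined 1 :: 'a^'n) w0 \<noteq> 0" using w0 by (simp add: outer_eq_0)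
    ultimately show False using fnz by blast
  qed
  then obtain k where k: "w'$k \<noteq> 0" by (auto simp: vec_eq_iff)
  define \<psi> :: "'a^'n \<Rightarrow> 'a^'n2" where "\<psi> u = (\<chi> i. f (outer u w0) $ i $ k / w'$k)" for u
  have hpsi: "f (outer u w0) = outer (\<psi> u) w'" for u
  proof -
    obtain x where x: "f (outer u w0) = outer x w'" using ex by blast
    have "\<psi> u = x" using k by (simp add: \<psi>_def x vec_eq_iff)
    then show ?thesis using x by simp
  qed
  have lpsi: "Vector_Spaces.linear (*s) (*s) \<psi>"
    unfolding Vector_Spaces.linear_iff
  proof (intro conjI allI)
    show "vector_space ((*s) :: 'a \<Rightarrow> 'a^'n \<Rightarrow> _)" by (rule vec.vector_space_axioms)
    show "vector_space ((*s) :: 'a \<Rightarrow> 'a^'n2 \<Rightarrow> _)" by (rule vec.vector_space_axioms)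
    fix x y :: "'a^'n"
    show "\<psi> (x + y) = \<psi> x + \<psi> y"
      by (simp add: \<psi>_def outer_add_left lin_add[OF lf] vec_eq_iff add_divide_distrib)
  next
    fix c and x :: "'a^'n"
    have "f (outer (c *s x) w0) = mat_scale c (f (outer x w0))"
      by (simp only: outer_scale_left lin_scale[OF lf])
    then show "\<psi> (c *s x) = c *s \<psi> x"
      by (simp add: \<psi>_def vec_eq_iff mat_scale_def)
  qed
  have ipsi: "inj \<psi>"
  proof (rule injI)
    fix u v assume "\<psi> u = \<psi> v"
    then have "f (outer u w0) = f (outer v w0)" using hpsi by simp
    then have "outer u w0 = outer v w0" using fi by (simp add: inj_eq)
    then have "\<And>i. u$i * w0$j0 = v$i * w0$j0" by (metis outer_nth)
    then show "u = v" using j0 by (simp add: vec_eq_iff)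
  qed
  have Lpsi: "f ` Lset u \<subseteq> Lset (\<psi> u)" for u
  proof (cases "u = 0")
    case True
    then have L: "Lset u = {0}" by (auto simp: Lset_def)
    have "outer (\<psi> u) 0 \<in> Lset (\<psi> u)" by (rule outer_in_Lset)
    then show ?thesis unfolding L using f0 by simp
  next
    case False
    then obtain a where a: "f ` Lset u \<subseteq> Lset a" using PL by blast
    have "f (outer u w0) \<in> Lset a" using a outer_in_Lset[of u w0] by blast
    then obtain p where p: "f (outer u w0) = outer a p" by (auto simp: Lset_def)
    have nz: "f (outer u w0) \<noteq> 0" using fnz False w0 by (simp add: outer_eq_0)
    have "Lset a \<subseteq> Lset (\<psi> u)" using Lset_sub[of a p "\<psi> u" w'] p hpsi nz by simp
    then show ?thesis using a by blast
  qed
  have main: "f ` Matc V = Matc (\<psi> ` V)" if V: "vec.subspace V" for V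
  proof -
    have W: "vec.subspace (\<psi> ` V)" by (rule subspace_img[OF lpsi V])
    have sub: "f ` Matc V \<subseteq> Matc (\<psi> ` V)"
    proof
      fix N assume "N \<in> f ` Matc V"
      then obtain M where M: "M \<in> Matc V" "N = f M" by blast
      have "N = f (\<Sum>j\<in>UNIV. outer (column j M) (axis j 1))"
        unfolding M(2) by (rule arg_cong[where f=f, OF outer_expand])
      also have "\<dots> = (\<Sum>j\<in>UNIV. f (outer (column j M) (axis j 1)))"
        by (rule lin_sum[OF lf]) simp
      also have "\<dots> \<in> Matc (\<psi> ` V)"
      proof (rule Matc_sum[OF W])
        fix j
        have cj: "column j M \<in> V" using M(1) by (simp add: Matc_def)
        have "f (outer (column j M) (axis j 1)) \<in> Lset (\<psi> (column j M))"
          using Lpsi outer_in_Lset by blast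
        then obtain p where p: "f (outer (column j M) (axis j 1)) = outer (\<psi> (column j M)) p"
          by (auto simp: Lset_def)
        have "column l (outer (\<psi> (column j M)) p) \<in> \<psi> ` V" for l
        proof -
          have "column l (outer (\<psi> (column j M)) p) = \<psi> (p$l *s column j M)"
            by (simp add: lin_scale[OF lpsi] vec_eq_iff column_def mult.commute)
          then show ?thesis using vec.subspace_scale[OF V cj] by simp
        qed
        then show "f (outer (column j M) (axis j 1)) \<in> Matc (\<psi> ` V)" by (simp add: p Matc_def)
      qed
      finally show "N \<in> Matc (\<psi> ` V)" .
    qed
    have "card (f ` Matc V) = card (Matc V :: ('a^'m^'n) set)"
      by (rule card_image[OF inj_on_subset[OF fi subset_UNIV]])
    also have "\<dots> = card V ^ CARD('m)" by (rule card_Matc)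
    also have "\<dots> = card (\<psi> ` V) ^ CARD('m2)"
      using card_image[OF inj_on_subset[OF ipsi subset_UNIV, of V]] cm by simp
    also have "\<dots> = card (Matc (\<psi> ` V) :: ('a^'m2^'n2) set)" by (rule card_Matc[symmetric])
    finally have "card (f ` Matc V) = card (Matc (\<psi> ` V) :: ('a^'m2^'n2) set)" .
    then show ?thesis using sub by (intro card_subset_eq) auto
  qed
  show ?thesis using lpsi ipsi main by blast
qed

lemma orth_subspace: "vec.subspace (orth J)"
  unfolding vec.subspace_def orth_def dotp_def
  by (auto simp: sum.distrib distrib_left mult.left_commute simp flip: sum_distrib_left)

lemma dotp_axis: "dotp x (axis i 1) = x$i"
proof -
  have "dotp x (axis i 1) = (\<Sum>j\<in>UNIV. if j = i then x$j else 0)"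
    unfolding dotp_def axis_def by (rule sum.cong) auto
  then show ?thesis by simp
qed

lemma mat_dim_img:
  fixes f :: "'a::{finite,field}^'m^'n \<Rightarrow> 'a^'m2^'n2"
  assumes lf: "Vector_Spaces.linear mat_scale mat_scale f" and fi: "inj f"
  shows "mat_dim (f ` S) = mat_dim S"
proof -
  interpret vs1: vector_space "mat_scale :: 'a \<Rightarrow> 'a^'m^'n \<Rightarrow> _" by (rule vs_mat)
  interpret vs2: vector_space "mat_scale :: 'a \<Rightarrow> 'a^'m2^'n2 \<Rightarrow> _" by (rule vs_mat)
  obtain B where B: "vs1.independent B" "UNIV \<subseteq> vs1.span B" using vs1.basis_exists[of UNIV] by blast
  interpret fd: finite_dimensional_vector_space "mat_scale :: 'a \<Rightarrow> 'a^'m^'n \<Rightarrow> _" B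
    by unfold_locales (use B in auto)
  interpret p: finite_dimensional_vector_space_pair_1 "mat_scale :: 'a \<Rightarrow> 'a^'m^'n \<Rightarrow> _" B
      "mat_scale :: 'a \<Rightarrow> 'a^'m2^'n2 \<Rightarrow> _" by unfold_locales
  have "vs2.dim (f ` S) = vs1.dim S"
    by (rule p.dim_image_eq[OF lf]) (use fi in \<open>auto intro: inj_on_subset\<close>)
  then show ?thesis by (simp add: mat_dim_def)
qed

lemma inj_card_bij:
  fixes g :: "'a::finite \<Rightarrow> 'b::finite"
  assumes "inj g" "CARD('a) = CARD('b)" shows "bij g"
proof -
  have "card (range g) = CARD('b)" using assms card_image by metis
  then have "range g = UNIV" by (intro card_subset_eq) auto
  then show ?thesis using assms(1) by (simp add: bij_def)
qed

lemma rho_core: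
  fixes f :: "'a::{finite,field}^'m^'n \<Rightarrow> 'a^'m2^'n2" and \<psi> :: "'a^'n \<Rightarrow> 'a^'n2"
  assumes lf: "Vector_Spaces.linear mat_scale mat_scale f" and fi: "inj f"
    and cm: "CARD('m) = CARD('m2)" and cn: "CARD('n) = CARD('n2)"
    and lpsi: "Vector_Spaces.linear (*s) (*s) \<psi>" and ipsi: "inj \<psi>"
    and hV: "\<forall>V. vec.subspace V \<longrightarrow> f ` Matc V = Matc (\<psi> ` V)"
  shows "qpm_equiv (rho_c C) (rho_c (f ` C))"
proof -
  have cv: "CARD('a^'n) = CARD('a^'n2)" using cn by simp
  have bpsi: "bij \<psi>" by (rule inj_card_bij[OF ipsi cv])
  define \<psi>' where "\<psi>' = inv \<psi>"
  have r1: "\<psi> (\<psi>' v) = v" for v unfolding \<psi>'_def by (rule surj_f_inv_f[OF bij_is_surj[OF bpsi]])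
  have r2: "\<psi>' (\<psi> u) = u" for u using ipsi by (simp add: \<psi>'_def)
  have lpsi': "Vector_Spaces.linear (*s) (*s) \<psi>'"
    unfolding Vector_Spaces.linear_iff
  proof (intro conjI allI)
    show "vector_space ((*s) :: 'a \<Rightarrow> 'a^'n \<Rightarrow> _)" by (rule vec.vector_space_axioms)
    show "vector_space ((*s) :: 'a \<Rightarrow> 'a^'n2 \<Rightarrow> _)" by (rule vec.vector_space_axioms)
    fix x y :: "'a^'n2"
    have "\<psi> (\<psi>' (x + y)) = \<psi> (\<psi>' x + \<psi>' y)" by (simp add: r1 lin_add[OF lpsi])
    then show "\<psi>' (x + y) = \<psi>' x + \<psi>' y" using ipsi by (simp add: inj_eq)
  next
    fix c and x :: "'a^'n2"
    have "\<psi> (\<psi>' (c *s x)) = \<psi> (c *s \<psi>' x)" by (simp add: r1 lin_scale[OF lpsi])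
    then show "\<psi>' (c *s x) = c *s \<psi>' x" using ipsi by (simp add: inj_eq)
  qed
  define Q where "Q = matrix \<psi>'"
  have Qw: "Q *v v = \<psi>' v" for v unfolding Q_def by (rule matrix_works[OF lpsi'])
  define \<phi> where "\<phi> u = transpose Q *v u" for u
  have lphi: "Vector_Spaces.linear (*s) (*s) \<phi>"
    unfolding \<phi>_def by (rule matrix_vector_mul_linear_gen)
  have key: "dotp (\<phi> u) v = dotp u (\<psi>' v)" for u v
  proof -
    have "dotp (\<phi> u) v = (\<Sum>k\<in>UNIV. (\<Sum>i\<in>UNIV. Q$i$k * u$i) * v$k)"
      by (simp add: \<phi>_def dotp_def matrix_vector_mult_def transpose_def)
    also have "\<dots> = (\<Sum>i\<in>UNIV. u$i * (\<Sum>k\<in>UNIV. Q$i$k * v$k))"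
      by (simp add: sum_distrib_left sum_distrib_right mult_ac) (rule sum.swap)
    also have "\<dots> = dotp u (Q *v v)"
      by (simp add: dotp_def matrix_vector_mult_def)
    finally show ?thesis by (simp add: Qw)
  qed
  have iphi: "inj \<phi>"
  proof (rule injI)
    fix a b assume "\<phi> a = \<phi> b"
    then have "dotp a (\<psi>' v) = dotp b (\<psi>' v)" for v using key by metis
    then have "dotp a (axis i 1) = dotp b (axis i 1)" for i using r2 by metis
    then show "a = b" by (simp add: dotp_axis vec_eq_iff)
  qed
  have bphi: "bij \<phi>" by (rule inj_card_bij[OF iphi cv])
  have orth_eq: "orth (\<phi> ` A) = \<psi> ` orth A" for A
  proof
    show "orth (\<phi> ` A) \<subseteq> \<psi> ` orth A"
    proof
      fix v assume "v \<in> orth (\<phi> ` A)"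
      then have "\<psi>' v \<in> orth A" by (simp add: orth_def key)
      then show "v \<in> \<psi> ` orth A" using r1 by (metis image_eqI)
    qed
    show "\<psi> ` orth A \<subseteq> orth (\<phi> ` A)"
      by (auto simp: orth_def key r2)
  qed
  have subc: "sub_c (f ` C) (\<psi> ` W) = f ` sub_c C W" if W: "vec.subspace W" for W
  proof -
    have W2: "vec.subspace (\<psi> ` W)" by (rule subspace_img[OF lpsi W])
    have "sub_c C W = C \<inter> Matc W" using colsp_sub[OF W] by (auto simp: sub_c_def)
    moreover have "sub_c (f ` C) (\<psi> ` W) = f ` C \<inter> Matc (\<psi> ` W)"
      using colsp_sub[OF W2] by (auto simp: sub_c_def)
    ultimately show ?thesis using hV W image_Int[OF fi] by simp
  qed
  have "rho_c C A = rho_c (f ` C) (\<phi> ` A)" for A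
  proof -
    have "sub_c (f ` C) (orth (\<phi> ` A)) = f ` sub_c C (orth A)"
      unfolding orth_eq by (rule subc[OF orth_subspace])
    then show ?thesis
      unfolding rho_c_def using mat_dim_img[OF lf fi] cm by simp
  qed
  then show ?thesis unfolding qpm_equiv_def using lphi bphi by blast
qed

lemma lin_transpose: "Vector_Spaces.linear mat_scale mat_scale (transpose :: 'a::field^'m^'n \<Rightarrow> 'a^'n^'m)"
  unfolding Vector_Spaces.linear_iff
  by (intro conjI vs_mat allI) (simp_all add: vec_eq_iff transpose_def mat_scale_def)

lemma inj_transpose: "inj (transpose :: 'a::field^'m^'n \<Rightarrow> 'a^'n^'m)"
  by (simp add: inj_def)

lemma transpose_outer: "transpose (outer x w) = outer w x"
  by (simp add: vec_eq_iff transpose_def mult.commute)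

lemma T_Lset: "transpose ` (Lset u :: ('a::field^'m^'n) set) = Rset u"
  unfolding Lset_def Rset_def by (auto simp: transpose_outer image_iff)
lemma T_Rset: "transpose ` (Rset w :: ('a::field^'m^'n) set) = Lset w"
  unfolding Lset_def Rset_def by (auto simp: transpose_outer image_iff)

lemma TT: "transpose ` transpose ` C = C"
  by (simp add: image_comp o_def)

lemma rho_r_T: "rho_r (C :: ('a::{finite,field}^'m^'n) set) = rho_c (transpose ` C)"
proof
  fix K :: "('a^'m) set"
  have rs: "rowsp M = colsp (transpose M)" for M :: "'a^'m^'n"
    by (simp add: rowsp_def colsp_def)
  have "sub_c (transpose ` C) (orth K) = transpose ` sub_r C (orth K)"
    by (auto simp: sub_c_def sub_r_def rs)
  moreover have "mat_dim (transpose ` sub_r C (orth K)) = mat_dim (sub_r C (orth K))"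
    by (rule mat_dim_img[OF lin_transpose inj_transpose])
  moreover have "mat_dim (transpose ` C) = mat_dim C"
    by (rule mat_dim_img[OF lin_transpose inj_transpose])
  ultimately show "rho_r C K = rho_c (transpose ` C) K"
    unfolding rho_r_def rho_c_def by simp
qed

lemma final_step:
  fixes k :: "'a::{finite,field}^'m^'n \<Rightarrow> 'a^'m2^'n2"
  assumes lk: "Vector_Spaces.linear mat_scale mat_scale k" and ik: "inj k"
    and cm: "CARD('m) = CARD('m2)" and cn: "CARD('n) = CARD('n2)"
    and PL: "\<forall>u. u \<noteq> 0 \<longrightarrow> (\<exists>a. k ` Lset u \<subseteq> Lset a)"
    and w0: "w0 \<noteq> 0" and PR: "k ` Rset w0 \<subseteq> Rset w'"
  shows "qpm_equiv (rho_c D) (rho_c (k ` D))"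
proof -
  obtain \<psi> :: "'a^'n \<Rightarrow> 'a^'n2" where "Vector_Spaces.linear (*s) (*s) \<psi>" "inj \<psi>"
     "\<forall>V. vec.subspace V \<longrightarrow> k ` Matc V = Matc (\<psi> ` V)"
    using core[OF lk ik cm PL w0 PR] by blast
  then show ?thesis using rho_core[OF lk ik cm cn] by blast
qed

theorem proposition5p7:
  fixes C1 C2 :: "('a::{finite,field}^'m^'n) set"
  assumes "2 \<le> CARD('n)" and "CARD('n) \<le> CARD('m)"
    and "rank_metric_code C1" and "rank_metric_code C2"
    and "code_equiv C1 C2"
  shows "(CARD('m) > CARD('n) \<longrightarrow>
            qpm_equiv (rho_c C1) (rho_c C2) \<and> qpm_equiv (rho_r C1) (rho_r C2))
       \<and> (CARD('n) = CARD('m) \<longrightarrow>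
            (qpm_equiv (rho_c C1) (rho_c C2) \<and> qpm_equiv (rho_r C1) (rho_r C2)) \<or>
            (qpm_equiv (rho_c C1) (rho_r C2) \<and> qpm_equiv (rho_r C1) (rho_c C2)))"
proof -
  obtain f :: "'a^'m^'n \<Rightarrow> 'a^'m^'n" where lf: "Vector_Spaces.linear mat_scale mat_scale f"
    and rp: "\<forall>M N. rank (f M - f N) = rank (M - N)" and fC: "f ` C1 = C2"
    using assms(5) unfolding code_equiv_def by blast
  have n2: "2 \<le> CARD('n)" and m2: "2 \<le> CARD('m)" using assms(1,2) by auto
  have fi: "inj f" by (rule f_inj[OF lf rp])
  define T1 where "T1 = (transpose :: 'a^'m^'n \<Rightarrow> 'a^'n^'m)"
  define T2 where "T2 = (transpose :: 'a^'n^'m \<Rightarrow> 'a^'m^'n)"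
  have lT1: "Vector_Spaces.linear mat_scale mat_scale T1" unfolding T1_def by (rule lin_transpose)
  have lT2: "Vector_Spaces.linear mat_scale mat_scale T2" unfolding T2_def by (rule lin_transpose)
  have iT1: "inj T1" unfolding T1_def by (rule inj_transpose)
  have iT2: "inj T2" unfolding T2_def by (rule inj_transpose)
  have T21: "T2 ` T1 ` C = C" for C unfolding T1_def T2_def by (rule TT)
  define e :: "'a^'n" where "e = axis undefined 1"
  have e: "e \<noteq> 0" by (simp add: e_def)
  define e' :: "'a^'m" where "e' = axis undefined 1"
  have e': "e' \<noteq> 0" by (simp add: e'_def)
  have rr1: "rho_r C1 = rho_c (T1 ` C1)" unfolding T1_def by (rule rho_r_T)
  have rr2: "rho_r C2 = rho_c (T1 ` C2)" unfolding T1_def by (rule rho_r_T)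
  have straight: "qpm_equiv (rho_c C1) (rho_c C2) \<and> qpm_equiv (rho_r C1) (rho_r C2)"
    if PL: "\<forall>u. u \<noteq> 0 \<longrightarrow> (\<exists>a. f ` Lset u \<subseteq> Lset a)"
    and PR: "\<forall>w. w \<noteq> 0 \<longrightarrow> (\<exists>b. f ` Rset w \<subseteq> Rset b)"
  proof
    obtain b where b: "f ` Rset e' \<subseteq> Rset b" using PR e' by blast
    have "qpm_equiv (rho_c C1) (rho_c (f ` C1))"
      by (rule final_step[OF lf fi refl refl PL e' b])
    then show "qpm_equiv (rho_c C1) (rho_c C2)" using fC by simp
    define k where "k = T1 \<circ> f \<circ> T2"
    have lk: "Vector_Spaces.linear mat_scale mat_scale k"
      unfolding k_def by (rule Vector_Spaces.linear_compose[OF lT2 Vector_Spaces.linear_compose[OF lf lT1]])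
    have ik: "inj k" unfolding k_def by (intro inj_compose iT1 iT2 fi)
    have kPL: "\<forall>u. u \<noteq> 0 \<longrightarrow> (\<exists>a. k ` Lset u \<subseteq> Lset a)"
    proof (intro allI impI)
      fix u :: "'a^'m" assume "u \<noteq> 0"
      then obtain b where b: "f ` Rset u \<subseteq> Rset b" using PR by blast
      have "T2 ` Lset u = Rset u" unfolding T2_def by (rule T_Lset)
      moreover have "k ` Lset u = T1 ` f ` T2 ` Lset u" unfolding k_def by (simp add: image_image)
      ultimately have "k ` Lset u = T1 ` f ` Rset u" by simp
      also have "\<dots> \<subseteq> T1 ` Rset b" using b by blast
      also have "\<dots> = Lset b" unfolding T1_def by (rule T_Rset)
      finally show "\<exists>a. k ` Lset u \<subseteq> Lset a" by blast
    qed
    obtain a where a: "f ` Lset e \<subseteq> Lset a" using PL e by blast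
    have kPR: "k ` Rset e \<subseteq> Rset a"
    proof -
      have "T2 ` Rset e = Lset e" unfolding T2_def by (rule T_Rset)
      moreover have "k ` Rset e = T1 ` f ` T2 ` Rset e" unfolding k_def by (simp add: image_image)
      ultimately have "k ` Rset e = T1 ` f ` Lset e" by simp
      also have "\<dots> \<subseteq> T1 ` Lset a" using a by blast
      also have "\<dots> = Rset a" unfolding T1_def by (rule T_Lset)
      finally show ?thesis .
    qed
    have "k ` (T1 ` C1) = T1 ` f ` T2 ` T1 ` C1" unfolding k_def by (simp add: image_image)
    then have "T1 ` C2 = k ` (T1 ` C1)" using fC T21 by simp
    then show "qpm_equiv (rho_r C1) (rho_r C2)"
      using final_step[OF lk ik refl refl kPL e kPR, of "T1 ` C1"] rr1 rr2 by simp
  qed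
  have swapped: "qpm_equiv (rho_c C1) (rho_r C2) \<and> qpm_equiv (rho_r C1) (rho_c C2)"
    if eq: "CARD('n) = CARD('m)"
    and QL: "\<forall>u. u \<noteq> 0 \<longrightarrow> (\<exists>a. f ` Lset u \<subseteq> Rset a)"
    and QR: "\<forall>w. w \<noteq> 0 \<longrightarrow> (\<exists>b. f ` Rset w \<subseteq> Lset b)"
  proof
    define g where "g = T1 \<circ> f"
    have lg: "Vector_Spaces.linear mat_scale mat_scale g"
      unfolding g_def by (rule Vector_Spaces.linear_compose[OF lf lT1])
    have ig: "inj g" unfolding g_def by (intro inj_compose iT1 fi)
    have gPL: "\<forall>u. u \<noteq> 0 \<longrightarrow> (\<exists>a. g ` Lset u \<subseteq> Lset a)"
    proof (intro allI impI)
      fix u :: "'a^'n" assume "u \<noteq> 0"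
      then obtain b where b: "f ` Lset u \<subseteq> Rset b" using QL by blast
      have "g ` Lset u = T1 ` f ` Lset u" unfolding g_def by (simp add: image_image)
      also have "\<dots> \<subseteq> T1 ` Rset b" using b by blast
      also have "\<dots> = Lset b" unfolding T1_def by (rule T_Rset)
      finally show "\<exists>a. g ` Lset u \<subseteq> Lset a" by blast
    qed
    obtain b where b: "f ` Rset e' \<subseteq> Lset b" using QR e' by blast
    have gPR: "g ` Rset e' \<subseteq> Rset b"
    proof -
      have "g ` Rset e' = T1 ` f ` Rset e'" unfolding g_def by (simp add: image_image)
      also have "\<dots> \<subseteq> T1 ` Lset b" using b by blast
      also have "\<dots> = Rset b" unfolding T1_def by (rule T_Lset)
      finally show ?thesis .
    qed
    have "g ` C1 = T1 ` f ` C1" unfolding g_def by (simp add: image_image)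
    then have "T1 ` C2 = g ` C1" using fC by simp
    then show "qpm_equiv (rho_c C1) (rho_r C2)"
      using final_step[OF lg ig eq[symmetric] eq gPL e' gPR, of C1] rr2 by simp
    define h where "h = f \<circ> T2"
    have lh: "Vector_Spaces.linear mat_scale mat_scale h"
      unfolding h_def by (rule Vector_Spaces.linear_compose[OF lT2 lf])
    have ih: "inj h" unfolding h_def by (intro inj_compose iT2 fi)
    have hPL: "\<forall>u. u \<noteq> 0 \<longrightarrow> (\<exists>a. h ` Lset u \<subseteq> Lset a)"
    proof (intro allI impI)
      fix u :: "'a^'m" assume "u \<noteq> 0"
      then obtain b where b: "f ` Rset u \<subseteq> Lset b" using QR by blast
      have "T2 ` Lset u = Rset u" unfolding T2_def by (rule T_Lset)
      moreover have "h ` Lset u = f ` T2 ` Lset u" unfolding h_def by (simp add: image_image)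
      ultimately have "h ` Lset u = f ` Rset u" by simp
      then show "\<exists>a. h ` Lset u \<subseteq> Lset a" using b by auto
    qed
    obtain a where a: "f ` Lset e \<subseteq> Rset a" using QL e by blast
    have hPR: "h ` Rset e \<subseteq> Rset a"
    proof -
      have "T2 ` Rset e = Lset e" unfolding T2_def by (rule T_Rset)
      moreover have "h ` Rset e = f ` T2 ` Rset e" unfolding h_def by (simp add: image_image)
      ultimately have "h ` Rset e = f ` Lset e" by simp
      then show ?thesis using a by simp
    qed
    have "h ` (T1 ` C1) = f ` T2 ` T1 ` C1" unfolding h_def by (simp add: image_image)
    then have "C2 = h ` (T1 ` C1)" using fC T21 by simp
    then show "qpm_equiv (rho_r C1) (rho_c C2)"
      using final_step[OF lh ih eq eq[symmetric] hPL e hPR, of "T1 ` C1"] rr1 by simp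
  qed
  show ?thesis
  proof (rule conjI; rule impI)
    assume lt: "CARD('n) < CARD('m)"
    have c: "(\<forall>u. u \<noteq> 0 \<longrightarrow> (\<exists>a. f ` Lset u \<subseteq> Lset a)) \<and> (\<forall>w. w \<noteq> 0 \<longrightarrow> (\<exists>b. f ` Rset w \<subseteq> Rset b))"
      by (rule classify_gt[OF lf rp n2 m2 lt])
    show "qpm_equiv (rho_c C1) (rho_c C2) \<and> qpm_equiv (rho_r C1) (rho_r C2)"
      by (rule straight[OF conjunct1[OF c] conjunct2[OF c]])
  next
    assume eq: "CARD('n) = CARD('m)"
    show "(qpm_equiv (rho_c C1) (rho_c C2) \<and> qpm_equiv (rho_r C1) (rho_r C2)) \<or>
          (qpm_equiv (rho_c C1) (rho_r C2) \<and> qpm_equiv (rho_r C1) (rho_c C2))"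
    proof (rule disjE[OF classify[OF lf rp n2 m2]])
      assume c: "(\<forall>u. u \<noteq> 0 \<longrightarrow> (\<exists>a. f ` Lset u \<subseteq> Lset a)) \<and> (\<forall>w. w \<noteq> 0 \<longrightarrow> (\<exists>b. f ` Rset w \<subseteq> Rset b))"
      show ?thesis by (rule disjI1, rule straight[OF conjunct1[OF c] conjunct2[OF c]])
    next
      assume c: "(\<forall>u. u \<noteq> 0 \<longrightarrow> (\<exists>a. f ` Lset u \<subseteq> Rset a)) \<and> (\<forall>w. w \<noteq> 0 \<longrightarrow> (\<exists>b. f ` Rset w \<subseteq> Lset b))"
      show ?thesis by (rule disjI2, rule swapped[OF eq conjunct1[OF c] conjunct2[OF c]])
    qed
  qed
qed


end
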